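(* Let $(A(n))_{n\ge1}$ be an i.i.d. sequence of random topical operators on $\mathbb R^d$ with the memory loss property and let $\phi:\mathbb R^d\to\mathbb R$ be topical. Suppose there exist $\sigma>0$ and a $\sigma$-finite measure $\alpha$ on $\mathbb R^d$, whose image by $x\mapsto(\bar x,\phi(x))$ is $\nu_0\otimes$(Lebesgue measure), such that for every bounded $\mathbb R^d$-valued random variable $X^0$ independent of $(A(n))$ and every continuous compactly supported $h$ on $\mathbb R^d$, $$\lim_n\sup_{u\in\mathbb R}\Big|\sigma\sqrt{2\pi n}\,\mathbb E\big[h(x(n,X^0)-n\gamma\mathbf 1-u\mathbf 1)\big]-\mathbb E\Big[e^{-\frac{(u+\phi(X^0))^2}{2n\sigma^2}}\Big]\alpha(h)\Big|=0.$$ Then $(A(n))$ is algebraically non arithmetic.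
   Context: A map $A:\mathbb R^d\to\mathbb R^d$ is topical if it is isotone ($x\le y$ coordinatewise implies $Ax\le Ay$) and additively homogeneous ($A(x+a\mathbf 1)=Ax+a\mathbf 1$, $\mathbf 1=(1,\dots,1)'$). A map $\phi:\mathbb R^d\to\mathbb R$ is topical if isotone and $\phi(x+a\mathbf 1)=\phi(x)+a$. $Top_d$ is the set of topical operators, with the topology of uniform convergence on compact sets. $\mathbb{PR}^d_{\max}$ is the quotient of $\mathbb R^d$ by $x\sim y\iff x-y\in\mathbb R\mathbf 1$, $\bar x$ the class of $x$. $A$ has rank 1 if $\overline{Ax}$ does not depend on $x$. The sequence has the memory loss property if some $A(N)\cdots A(1)$ has rank 1 with positive probability. $x(0,X^0)=X^0$, $x(n,X^0)=A(n)x(n-1,X^0)$; $\gamma$ is the Lyapunov exponent ($x(n,X^0)/n\to\gamma\mathbf 1$ a.s.). $\nu_0$ is the unique invariant probability measure on $\mathbb{PR}^d_{\max}$ of the Markov chain $\bar x(n,\cdot)$. $S_A$ is the support of the law of $A(1)$ and $T_A$ the semigroup generated by $S_A$. The sequence is algebraically arithmetic if there are $a,b\in\mathbb R$ and $\theta\in Top_d$ of rank 1 such that for all $A\in S_A$ and all $\theta'\in T_A$ of rank 1, $(\theta A\theta'-\theta\theta')(\mathbb R^d)\subset(a+b\mathbb Z)\mathbf 1$; otherwise it is algebraically non arithmetic. *)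

theory Defs
  imports "HOL-Probability.Probability"
begin

definition ones :: "real^'d" where
  "ones = (\<chi> i. 1)"

definition topical_op :: "(real^'d \<Rightarrow> real^'d) \<Rightarrow> bool" where
  "topical_op f \<longleftrightarrow>
     (\<forall>x y. (\<forall>i. x$i \<le> y$i) \<longrightarrow> (\<forall>i. f x $ i \<le> f y $ i)) \<and>
     (\<forall>x a. f (x + a *\<^sub>R ones) = f x + a *\<^sub>R ones)"

definition topical_fun :: "(real^'d \<Rightarrow> real) \<Rightarrow> bool" where
  "topical_fun f \<longleftrightarrow>
     (\<forall>x y. (\<forall>i. x$i \<le> y$i) \<longrightarrow> f x \<le> f y) \<and>
     (\<forall>x a. f (x + a *\<^sub>R ones) = f x + a)"

text \<open>Rank one: the projective class of f x does not depend on x.\<close>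
definition rank_one :: "(real^'d \<Rightarrow> real^'d) \<Rightarrow> bool" where
  "rank_one f \<longleftrightarrow> (\<forall>x y. \<exists>c. f x - f y = c *\<^sub>R ones)"

text \<open>Projective space PR^d_max is represented by the hyperplane {x. sum of coordinates = 0};
  proj x is the representative of the class of x.\<close>
definition proj :: "real^'d \<Rightarrow> real^'d" where
  "proj x = x - ((\<Sum>i\<in>UNIV. x$i) / real CARD('d)) *\<^sub>R ones"

text \<open>Measurable space of operators: sigma-algebra generated by the evaluations
  (on Top_d this is the Borel sigma-algebra of uniform convergence on compacts).\<close>
definition op_space :: "(real^'d \<Rightarrow> real^'d) measure" where
  "op_space = PiM UNIV (\<lambda>_. borel)"

text \<open>prodop A n \<omega> = A(n) \<circ> ... \<circ> A(1), so x(n,X0) = prodop A n \<omega> X0.\<close>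
fun prodop :: "(nat \<Rightarrow> 'w \<Rightarrow> real^'d \<Rightarrow> real^'d) \<Rightarrow> nat \<Rightarrow> 'w \<Rightarrow> real^'d \<Rightarrow> real^'d" where
  "prodop A 0 \<omega> = id"
| "prodop A (Suc n) \<omega> = A (Suc n) \<omega> \<circ> prodop A n \<omega>"

definition supp_law :: "'w measure \<Rightarrow> ('w \<Rightarrow> real^'d \<Rightarrow> real^'d) \<Rightarrow> (real^'d \<Rightarrow> real^'d) set" where
  "supp_law M B = {C. topical_op C \<and>
     (\<forall>K e. compact K \<and> e > 0 \<longrightarrow>
        measure M {\<omega> \<in> space M. \<forall>x\<in>K. dist (B \<omega> x) (C x) < e} > 0)}"

inductive_set gen_semigroup :: "(real^'d \<Rightarrow> real^'d) set \<Rightarrow> (real^'d \<Rightarrow> real^'d) set"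
  for S where
  base: "f \<in> S \<Longrightarrow> f \<in> gen_semigroup S"
| comp: "f \<in> gen_semigroup S \<Longrightarrow> g \<in> gen_semigroup S \<Longrightarrow> f \<circ> g \<in> gen_semigroup S"

definition alg_arithmetic :: "(real^'d \<Rightarrow> real^'d) set \<Rightarrow> bool" where
  "alg_arithmetic S \<longleftrightarrow>
     (\<exists>a b :: real. \<exists>\<theta>. topical_op \<theta> \<and> rank_one \<theta> \<and>
        (\<forall>B\<in>S. \<forall>\<theta>'\<in>gen_semigroup S. rank_one \<theta>' \<longrightarrow>
           (\<forall>x. \<exists>k::int. \<theta> (B (\<theta>' x)) - \<theta> (\<theta>' x) = (a + b * of_int k) *\<^sub>R ones)))"

definition invariant_pr :: "'w measure \<Rightarrow> ('w \<Rightarrow> real^'d \<Rightarrow> real^'d) \<Rightarrow> (real^'d) measure \<Rightarrow> bool" where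
  "invariant_pr M B \<nu> \<longleftrightarrow> prob_space \<nu> \<and> sets \<nu> = sets borel \<and>
     (AE x in \<nu>. proj x = x) \<and>
     distr (\<nu> \<Otimes>\<^sub>M M) borel (\<lambda>(x, \<omega>). proj (B \<omega> x)) = \<nu>"

end

theory Submission
  imports Defs
begin


lemma ones_nth[simp]: "ones $ i = 1"
  by (simp add: ones_def)

lemma topical_fun_le:
  assumes f: "topical_fun f"
  shows "f x \<le> f z + norm (x - z)"
proof -
  have "\<forall>i. x$i \<le> (z + norm (x - z) *\<^sub>R ones)$i"
  proof
    fix i
    have "x$i - z$i \<le> norm (x - z)"
      using component_le_norm_cart[of "x - z" i] by simp
    then show "x$i \<le> (z + norm (x - z) *\<^sub>R ones)$i" by simp
  qed
  then have "f x \<le> f (z + norm (x - z) *\<^sub>R ones)" using f unfolding topical_fun_def by blast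
  also have "\<dots> = f z + norm (x - z)" using f unfolding topical_fun_def by blast
  finally show ?thesis .
qed

lemma topical_fun_lip:
  assumes f: "topical_fun f"
  shows "\<bar>f x - f z\<bar> \<le> norm (x - z)"
  using topical_fun_le[OF f, of x z] topical_fun_le[OF f, of z x] by (simp add: norm_minus_commute)

lemma topical_fun_cont:
  assumes f: "topical_fun f"
  shows "continuous_on UNIV f"
  unfolding continuous_on_iff
  by (metis dist_norm dist_real_def f le_less_trans topical_fun_lip)

lemma topical_op_coord:
  assumes f: "topical_op f"
  shows "topical_fun (\<lambda>x. f x $ i)"
  using f unfolding topical_op_def topical_fun_def by simp

lemma topical_fun_shift:
  assumes f: "topical_fun f"
  shows "f (x + a *\<^sub>R ones) = f x + a"
  using f unfolding topical_fun_def by blast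

lemma topical_op_shift:
  assumes f: "topical_op f"
  shows "f (x + a *\<^sub>R ones) = f x + a *\<^sub>R ones"
  using f unfolding topical_op_def by blast

lemma topical_op_lip:
  fixes x z :: "real^'d"
  assumes f: "topical_op f"
  shows "norm (f x - f z) \<le> real CARD('d) * norm (x - z)"
proof -
  have "norm (f x - f z) \<le> (\<Sum>i\<in>UNIV. \<bar>(f x - f z)$i\<bar>)" by (rule norm_le_l1_cart)
  also have "\<dots> \<le> (\<Sum>i\<in>(UNIV::'d set). norm (x - z))"
    apply (rule sum_mono)
    using topical_fun_lip[OF topical_op_coord[OF f]] by simp
  also have "\<dots> = real CARD('d) * norm (x - z)" by simp
  finally show ?thesis .
qed

lemma topical_op_cont:
  assumes f: "topical_op f"
  shows "continuous_on UNIV f"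
  unfolding continuous_on_iff
proof (intro ballI allI impI)
  fix x :: "real^'a" and e :: real assume e: "e > 0"
  let ?c = "real CARD('a)"
  have c: "?c > 0" by simp
  show "\<exists>d>0. \<forall>x'\<in>UNIV. dist x' x < d \<longrightarrow> dist (f x') (f x) < e"
  proof (intro exI[of _ "e / ?c"] conjI ballI impI)
    show "e / ?c > 0" using e c by simp
    fix x' assume "dist x' x < e / ?c"
    then have "?c * norm (x' - x) < e" using c by (simp add: dist_norm field_simps)
    then show "dist (f x') (f x) < e"
      using topical_op_lip[OF f, of x' x] by (simp add: dist_norm)
  qed
qed

lemma rank_one_comp:
  assumes f: "topical_op f" and g: "rank_one g"
  shows "rank_one (f \<circ> g)"
  unfolding rank_one_def
proof (intro allI)
  fix x y
  obtain c where "g x - g y = c *\<^sub>R ones" using g unfolding rank_one_def by blast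
  then have "g x = g y + c *\<^sub>R ones" by (simp add: algebra_simps)
  then show "\<exists>c. (f \<circ> g) x - (f \<circ> g) y = c *\<^sub>R ones"
    using topical_op_shift[OF f] by auto
qed


lemma op_space_eval_meas:
  assumes "A1 \<in> measurable M op_space"
  shows "(\<lambda>\<omega>. A1 \<omega> q) \<in> borel_measurable M"
  using measurable_compose[OF assms[unfolded op_space_def] measurable_component_singleton[OF UNIV_I]] .

lemma V_meas:
  fixes A1 :: "'w \<Rightarrow> real^'d \<Rightarrow> real^'d"
  assumes mA: "A1 \<in> measurable M op_space" and tA: "\<forall>\<omega>\<in>space M. topical_op (A1 \<omega>)"
    and K: "compact K" and C: "topical_op C"
  shows "{\<omega>\<in>space M. \<forall>x\<in>K. dist (A1 \<omega> x) (C x) < e} \<in> sets M"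
proof -
  obtain T where T: "countable T" "T \<subseteq> K" "K \<subseteq> closure T" using separable by blast
  have ev[measurable]: "\<And>q. (\<lambda>\<omega>. A1 \<omega> q) \<in> borel_measurable M"
    using op_space_eval_meas[OF mA] .
  have eq: "{\<omega>\<in>space M. \<forall>x\<in>K. dist (A1 \<omega> x) (C x) < e} =
    {\<omega>\<in>space M. \<exists>m::nat. \<forall>q\<in>T. dist (A1 \<omega> q) (C q) \<le> e - 1 / real (Suc m)}"
  proof (intro set_eqI iffI)
    fix \<omega> assume "\<omega> \<in> {\<omega>\<in>space M. \<forall>x\<in>K. dist (A1 \<omega> x) (C x) < e}"
    then have \<omega>: "\<omega> \<in> space M" and lt: "\<forall>x\<in>K. dist (A1 \<omega> x) (C x) < e" by auto
    have cont: "continuous_on K (\<lambda>x. dist (A1 \<omega> x) (C x))"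
      using topical_op_cont[OF C] topical_op_cont tA \<omega>
      by (intro continuous_on_dist) (auto intro: continuous_on_subset)
    show "\<omega> \<in> {\<omega>\<in>space M. \<exists>m::nat. \<forall>q\<in>T. dist (A1 \<omega> q) (C q) \<le> e - 1 / real (Suc m)}"
    proof (cases "K = {}")
      case True then show ?thesis using \<omega> T by auto
    next
      case False
      obtain x0 where x0: "x0 \<in> K" "\<forall>y\<in>K. dist (A1 \<omega> y) (C y) \<le> dist (A1 \<omega> x0) (C x0)"
        using continuous_attains_sup[OF K False cont] by blast
      have "e - dist (A1 \<omega> x0) (C x0) > 0" using lt x0 by auto
      then obtain m where m: "inverse (real (Suc m)) < e - dist (A1 \<omega> x0) (C x0)"
        using reals_Archimedean by blast
      have "\<forall>q\<in>T. dist (A1 \<omega> q) (C q) \<le> e - 1 / real (Suc m)"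
        using x0 m T(2) by (force simp: inverse_eq_divide)
      then show ?thesis using \<omega> by auto
    qed
  next
    fix \<omega> assume "\<omega> \<in> {\<omega>\<in>space M. \<exists>m::nat. \<forall>q\<in>T. dist (A1 \<omega> q) (C q) \<le> e - 1 / real (Suc m)}"
    then obtain m where \<omega>: "\<omega> \<in> space M" and le: "\<forall>q\<in>T. dist (A1 \<omega> q) (C q) \<le> e - 1 / real (Suc m)"
      by auto
    have cont: "continuous_on UNIV (\<lambda>x. dist (A1 \<omega> x) (C x))"
      using topical_op_cont[OF C] topical_op_cont tA \<omega>
      by (intro continuous_on_dist) auto
    have cl: "closed {x. dist (A1 \<omega> x) (C x) \<le> e - 1 / real (Suc m)}"
      using continuous_closed_preimage_constant[OF cont closed_UNIV, of "e - 1 / real (Suc m)"] cont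
      by (intro closed_Collect_le) (auto intro: continuous_on_const)
    have "closure T \<subseteq> {x. dist (A1 \<omega> x) (C x) \<le> e - 1 / real (Suc m)}"
      using le by (intro closure_minimal cl) auto
    moreover have "1 / real (Suc m) > 0" by simp
    ultimately have "\<forall>x\<in>K. dist (A1 \<omega> x) (C x) < e"
    proof (intro ballI)
      fix x assume "x \<in> K"
      then have "x \<in> {x. dist (A1 \<omega> x) (C x) \<le> e - 1 / real (Suc m)}"
        using T(3) \<open>closure T \<subseteq> _\<close> by blast
      then have "dist (A1 \<omega> x) (C x) \<le> e - 1 / real (Suc m)" by simp
      moreover have "1 / real (Suc m) > 0" by simp
      ultimately show "dist (A1 \<omega> x) (C x) < e" by linarith
    qed
    then show "\<omega> \<in> {\<omega>\<in>space M. \<forall>x\<in>K. dist (A1 \<omega> x) (C x) < e}" using \<omega> by auto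
  qed
  have "{\<omega>\<in>space M. \<exists>m::nat. \<forall>q\<in>T. dist (A1 \<omega> q) (C q) \<le> e - 1 / real (Suc m)} \<in> sets M"
  proof (intro sets.sets_Collect_countable_Ex sets.sets_Collect_countable_All' T(1))
    fix m :: nat and q
    show "{\<omega>\<in>space M. dist (A1 \<omega> q) (C q) \<le> e - 1 / real (Suc m)} \<in> sets M" by measurable
  qed
  then show ?thesis by (subst eq)
qed


definition Uset :: "((real^'d) \<times> (real^'d)) list \<Rightarrow> nat \<Rightarrow> (real^'d \<Rightarrow> real^'d) set" where
  "Uset xs k = {f. \<forall>p\<in>set xs. dist (f (fst p)) (snd p) < 1 / real (Suc k)}"

lemma Uset_sets: 
  fixes xs :: "((real^'d) \<times> (real^'d)) list"
  shows "Uset xs k \<in> sets op_space"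
proof -
  have [measurable]: "\<And>q. (\<lambda>f. f q) \<in> borel_measurable (op_space :: (real^'d \<Rightarrow> real^'d) measure)"
    unfolding op_space_def by (rule measurable_component_singleton) simp
  have sp: "space (op_space :: (real^'d \<Rightarrow> real^'d) measure) = UNIV"
    unfolding op_space_def by (simp add: space_PiM)
  have "{f\<in>space (op_space :: (real^'d \<Rightarrow> real^'d) measure). \<forall>p\<in>set xs. dist (f (fst p)) (snd p) < 1 / real (Suc k)} \<in> sets (op_space :: (real^'d \<Rightarrow> real^'d) measure)"
  proof (cases "xs = []")
    case True 
    have "space (op_space :: (real^'d \<Rightarrow> real^'d) measure) \<in> sets op_space" by (rule sets.top)
    then show ?thesis using True by simp
  next
    case False
    then have ne: "set xs \<noteq> {}" by simp
    have "\<And>p. p \<in> set xs \<Longrightarrow> {f\<in>space (op_space :: (real^'d \<Rightarrow> real^'d) measure). dist (f (fst p)) (snd p) < 1 / real (Suc k)} \<in> sets op_space"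
      by measurable
    then show ?thesis by (intro sets.sets_Collect_finite_All' ne) auto
  qed
  then show ?thesis unfolding Uset_def sp by simp
qed

lemma supp_AE:
  fixes M :: "'w measure" and A1 B :: "'w \<Rightarrow> real^'d \<Rightarrow> real^'d"
  assumes P: "prob_space M"
    and mA: "A1 \<in> measurable M op_space" and mB: "B \<in> measurable M op_space"
    and deq: "distr M op_space B = distr M op_space A1"
    and tA: "\<forall>\<omega>\<in>space M. topical_op (A1 \<omega>)" and tB: "\<forall>\<omega>\<in>space M. topical_op (B \<omega>)"
  shows "AE \<omega> in M. B \<omega> \<in> supp_law M A1"
proof -
  interpret prob_space M by (rule P)
  obtain D :: "(real^'d) set" where D: "countable D" "D \<subseteq> UNIV" "UNIV \<subseteq> closure D"
    by (rule separable[of "UNIV :: (real^'d) set"])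
  have dense: "\<exists>q\<in>D. dist q x < d" if "d > 0" for x d
  proof -
    have "x \<in> closure D" using D(3) by (rule subsetD) simp
    then show ?thesis using that unfolding closure_approachable by blast
  qed
  define I where "I = {(xs, k). xs \<in> lists (D \<times> D) \<and> emeasure M {\<omega>\<in>space M. A1 \<omega> \<in> Uset xs k} = 0}"
  have cI: "countable I"
  proof (rule countable_subset)
    show "I \<subseteq> lists (D \<times> D) \<times> UNIV" unfolding I_def by auto
    show "countable (lists (D \<times> D) \<times> (UNIV :: nat set))"
      using D(1) by (intro countable_SIGMA countable_lists) auto
  qed
  have null: "{\<omega>\<in>space M. B \<omega> \<in> Uset (fst i) (snd i)} \<in> null_sets M" if "i \<in> I" for i
  proof -
    obtain xs k where i: "i = (xs, k)" by (cases i)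
    have e0: "emeasure M {\<omega>\<in>space M. A1 \<omega> \<in> Uset xs k} = 0" using that i unfolding I_def by auto
    have "emeasure M {\<omega>\<in>space M. B \<omega> \<in> Uset xs k} = emeasure (distr M op_space B) (Uset xs k)"
      using emeasure_distr[OF mB Uset_sets] by (simp add: Int_def conj_commute vimage_def)
    also have "\<dots> = emeasure (distr M op_space A1) (Uset xs k)" by (simp add: deq)
    also have "\<dots> = emeasure M {\<omega>\<in>space M. A1 \<omega> \<in> Uset xs k}"
      using emeasure_distr[OF mA Uset_sets] by (simp add: Int_def conj_commute vimage_def)
    finally have "emeasure M {\<omega>\<in>space M. B \<omega> \<in> Uset xs k} = 0" using e0 by simp
    moreover have "{\<omega>\<in>space M. B \<omega> \<in> Uset xs k} \<in> sets M"
      using measurable_sets[OF mB Uset_sets] by (simp add: Int_def conj_commute vimage_def)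
    ultimately show ?thesis using i by (simp add: null_sets_def)
  qed
  have cover: "{\<omega>\<in>space M. B \<omega> \<notin> supp_law M A1} \<subseteq> (\<Union>i\<in>I. {\<omega>\<in>space M. B \<omega> \<in> Uset (fst i) (snd i)})"
  proof
    fix \<omega> assume "\<omega> \<in> {\<omega>\<in>space M. B \<omega> \<notin> supp_law M A1}"
    then have \<omega>: "\<omega> \<in> space M" and ns: "B \<omega> \<notin> supp_law M A1" by auto
    define C where "C = B \<omega>"
    have tC: "topical_op C" using tB \<omega> C_def by auto
    obtain K e where K: "compact K" and e: "e > 0"
      and m0: "\<not> measure M {\<omega>\<in>space M. \<forall>x\<in>K. dist (A1 \<omega> x) (C x) < e} > 0"
      using ns tC unfolding supp_law_def C_def by auto
    define V where "V = {\<omega>\<in>space M. \<forall>x\<in>K. dist (A1 \<omega> x) (C x) < e}"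
    have Vs: "V \<in> sets M" unfolding V_def by (rule V_meas[OF mA tA K tC])
    have "measure M V = 0" using m0 measure_nonneg[of M V] unfolding V_def by linarith
    then have V0: "emeasure M V = 0" using Vs by (simp add: emeasure_eq_measure)
    define L where "L = real CARD('d)"
    have L: "L > 0" unfolding L_def by simp
    have e4: "e / 4 > 0" using e by simp
    obtain k where k: "inverse (real (Suc k)) < e / 4" using reals_Archimedean[OF e4] by blast
    define \<delta> where "\<delta> = e / (4 * L)"
    have \<delta>: "\<delta> > 0" unfolding \<delta>_def using e L by simp
    have "K \<subseteq> \<Union>((\<lambda>q. ball q \<delta>) ` D)"
    proof
      fix x assume "x \<in> K"
      obtain q where "q \<in> D" "dist q x < \<delta>" using dense[OF \<delta>] by blast
      then show "x \<in> \<Union>((\<lambda>q. ball q \<delta>) ` D)" by auto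
    qed
    then obtain F where F: "F \<subseteq> D" "finite F" "K \<subseteq> \<Union>((\<lambda>q. ball q \<delta>) ` F)"
      using compactE_image[OF K, of D "\<lambda>q. ball q \<delta>"] by blast
    define r where "r q = (SOME r. r \<in> D \<and> dist r (C q) < 1 / real (Suc k))" for q
    have r: "r q \<in> D \<and> dist (r q) (C q) < 1 / real (Suc k)" for q
      unfolding r_def by (rule someI_ex) (use dense[of "1 / real (Suc k)" "C q"] in auto)
    obtain xs0 where xs0: "set xs0 = F" using finite_list[OF F(2)] by blast
    define xs where "xs = map (\<lambda>q. (q, r q)) xs0"
    have xsD: "xs \<in> lists (D \<times> D)" unfolding xs_def using xs0 F(1) r by auto
    have CU: "C \<in> Uset xs k" unfolding Uset_def xs_def using r by (auto simp: dist_commute)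
    have sub: "{\<omega>\<in>space M. A1 \<omega> \<in> Uset xs k} \<subseteq> V"
    proof
      fix \<omega>' assume "\<omega>' \<in> {\<omega>\<in>space M. A1 \<omega> \<in> Uset xs k}"
      then have \<omega>': "\<omega>' \<in> space M" and U: "A1 \<omega>' \<in> Uset xs k" by auto
      have tA': "topical_op (A1 \<omega>')" using tA \<omega>' by auto
      have "dist (A1 \<omega>' x) (C x) < e" if x: "x \<in> K" for x
      proof -
        obtain q where q: "q \<in> F" "dist q x < \<delta>" using F(3) x by auto
        have d1: "dist (A1 \<omega>' x) (A1 \<omega>' q) \<le> e / 4"
        proof -
          have "dist (A1 \<omega>' x) (A1 \<omega>' q) \<le> L * dist x q"
            using topical_op_lip[OF tA', of x q] unfolding L_def by (simp add: dist_norm)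
          also have "\<dots> \<le> L * \<delta>" using q L by (simp add: dist_commute)
          also have "\<dots> = e / 4" unfolding \<delta>_def using L by simp
          finally show ?thesis .
        qed
        have d4: "dist (C q) (C x) \<le> e / 4"
        proof -
          have "dist (C q) (C x) \<le> L * dist q x"
            using topical_op_lip[OF tC, of q x] unfolding L_def by (simp add: dist_norm)
          also have "\<dots> \<le> L * \<delta>" using q L by simp
          also have "\<dots> = e / 4" unfolding \<delta>_def using L by simp
          finally show ?thesis .
        qed
        have d2: "dist (A1 \<omega>' q) (r q) < 1 / real (Suc k)"
          using U q(1) xs0 unfolding Uset_def xs_def by auto
        have d3: "dist (r q) (C q) < 1 / real (Suc k)" using r by auto
        have "dist (A1 \<omega>' x) (C x) \<le> dist (A1 \<omega>' x) (A1 \<omega>' q) + dist (A1 \<omega>' q) (r q) + dist (r q) (C q) + dist (C q) (C x)"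
        proof -
          have t1: "dist (A1 \<omega>' x) (C x) \<le> dist (A1 \<omega>' x) (A1 \<omega>' q) + dist (A1 \<omega>' q) (C x)"
            by (rule dist_triangle)
          have t2: "dist (A1 \<omega>' q) (C x) \<le> dist (A1 \<omega>' q) (r q) + dist (r q) (C x)"
            by (rule dist_triangle)
          have t3: "dist (r q) (C x) \<le> dist (r q) (C q) + dist (C q) (C x)"
            by (rule dist_triangle)
          show ?thesis using t1 t2 t3 by linarith
        qed
        also have "\<dots> < e" using d1 d2 d3 d4 k by (simp add: inverse_eq_divide)
        finally show ?thesis .
      qed
      then show "\<omega>' \<in> V" unfolding V_def using \<omega>' by auto
    qed
    have "emeasure M {\<omega>\<in>space M. A1 \<omega> \<in> Uset xs k} = 0"
      using emeasure_mono[OF sub Vs] V0 by simp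
    then have "(xs, k) \<in> I" unfolding I_def using xsD by auto
    moreover have "\<omega> \<in> {\<omega>\<in>space M. B \<omega> \<in> Uset (fst (xs, k)) (snd (xs, k))}"
      using \<omega> CU C_def by simp
    ultimately show "\<omega> \<in> (\<Union>i\<in>I. {\<omega>\<in>space M. B \<omega> \<in> Uset (fst i) (snd i)})"
      by blast
  qed
  show ?thesis
    by (rule AE_I'[OF null_sets_UN'[OF cI null] ]) (use cover in auto)
qed




definition mean :: "real^'d \<Rightarrow> real" where
  "mean z = (\<Sum>i\<in>UNIV. z$i) / real CARD('d)"

lemma proj_decomp: "proj z + mean z *\<^sub>R ones = z"
  by (simp add: proj_def mean_def)

lemma topical_fun_proj:
  assumes "topical_fun f"
  shows "f z = f (proj z) + mean z"
  using topical_fun_shift[OF assms, of "proj z" "mean z"] proj_decomp[of z] by simp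

lemma cont_proj: "continuous_on UNIV (proj :: real^'d \<Rightarrow> real^'d)"
  unfolding proj_def by (intro continuous_intros) auto

lemma exists_int_mult:
  fixes b :: real
  defines "\<beta> \<equiv> (if b = 0 then 1 else \<bar>b\<bar>)"
  shows "\<exists>j::int. b * of_int k = \<beta> * of_int j"
proof (cases "b = 0")
  case True then show ?thesis by (auto simp: \<beta>_def)
next
  case False
  show ?thesis
  proof (cases "b > 0")
    case True then show ?thesis using False by (intro exI[of _ k]) (simp add: \<beta>_def)
  next
    case f2: False then show ?thesis using False by (intro exI[of _ "-k"]) (simp add: \<beta>_def)
  qed
qed

lemma abs_half_int:
  fixes \<beta> :: real and m :: int
  assumes "\<beta> > 0"
  shows "\<bar>\<beta> / 2 + \<beta> * of_int m\<bar> \<ge> \<beta> / 2"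
proof (cases "m \<ge> 0")
  case True
  then have "\<beta> * of_int m \<ge> 0" using assms by simp
  then show ?thesis using assms by simp
next
  case False
  then have "of_int m \<le> (-1::real)" by simp
  then have "\<beta> * of_int m \<le> - \<beta>" using assms
    by (metis mult.right_neutral mult_le_cancel_left_pos mult_minus_right)
  then show ?thesis using assms by simp
qed

theorem proposition2p4:
  fixes M :: "'w measure"
    and A :: "nat \<Rightarrow> 'w \<Rightarrow> real^'d \<Rightarrow> real^'d"
    and \<phi> :: "real^'d \<Rightarrow> real"
    and \<gamma> \<sigma> :: real
    and \<nu>0 :: "(real^'d) measure"
    and \<alpha> :: "(real^'d) measure"
  assumes P: "prob_space M"
    and iid_indep: "prob_space.indep_vars M (\<lambda>_. op_space) A {1..}"
    and iid_meas: "\<forall>n\<ge>1. A n \<in> measurable M op_space"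
    and iid_dist: "\<forall>n\<ge>1. distr M op_space (A n) = distr M op_space (A 1)"
    and topical: "\<forall>n\<ge>1. \<forall>\<omega>\<in>space M. topical_op (A n \<omega>)"
    and memory_loss: "\<exists>N\<ge>1. measure M {\<omega> \<in> space M. rank_one (prodop A N \<omega>)} > 0"
    and lyapunov: "AE \<omega> in M. (\<lambda>n. (1 / real n) *\<^sub>R prodop A n \<omega> 0) \<longlonglongrightarrow> \<gamma> *\<^sub>R ones"
    and nu0_inv: "invariant_pr M (A 1) \<nu>0"
    and nu0_unique: "\<forall>\<nu>. invariant_pr M (A 1) \<nu> \<longrightarrow> \<nu> = \<nu>0"
    and phi: "topical_fun \<phi>"
    and sigma_pos: "\<sigma> > 0"
    and alpha_sf: "sigma_finite_measure \<alpha>"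
    and alpha_sets: "sets \<alpha> = sets borel"
    and alpha_image: "distr \<alpha> (borel \<Otimes>\<^sub>M borel) (\<lambda>x. (proj x, \<phi> x)) = \<nu>0 \<Otimes>\<^sub>M lborel"
    and LLT: "\<forall>(law :: (real^'d) measure) (h :: real^'d \<Rightarrow> real).
       prob_space law \<and> sets law = sets borel \<and> (\<exists>R. AE x in law. norm x \<le> R) \<and>
       continuous_on UNIV h \<and> (\<exists>K. compact K \<and> (\<forall>x. x \<notin> K \<longrightarrow> h x = 0)) \<longrightarrow>
       (\<forall>e>0. \<forall>\<^sub>F n in sequentially. \<forall>u::real.
          \<bar>\<sigma> * sqrt (2 * pi * real n) *
             (\<integral>x. (\<integral>\<omega>. h (prodop A n \<omega> x - (real n * \<gamma>) *\<^sub>R ones - u *\<^sub>R ones) \<partial>M) \<partial>law)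
           - (\<integral>x. exp (- ((u + \<phi> x)\<^sup>2) / (2 * real n * \<sigma>\<^sup>2)) \<partial>law) * (\<integral>x. h x \<partial>\<alpha>)\<bar> \<le> e)"
  shows "\<not> alg_arithmetic (supp_law M (A 1))"
proof
  assume arith: "alg_arithmetic (supp_law M (A 1))"
  define S where "S = supp_law M (A 1)"
  interpret prob_space M by (rule P)
  obtain a b :: real and \<theta> where \<theta>: "topical_op \<theta>"
    and cond: "\<forall>B\<in>S. \<forall>\<theta>'\<in>gen_semigroup S. rank_one \<theta>' \<longrightarrow>
           (\<forall>x. \<exists>k::int. \<theta> (B (\<theta>' x)) - \<theta> (\<theta>' x) = (a + b * of_int k) *\<^sub>R ones)"
    using arith unfolding alg_arithmetic_def S_def by blast
  have mA1: "A 1 \<in> measurable M op_space" using iid_meas by simp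
  have tA1: "\<forall>\<omega>\<in>space M. topical_op (A 1 \<omega>)" using topical by simp
  have AEn: "AE \<omega> in M. n \<ge> 1 \<longrightarrow> A n \<omega> \<in> S" for n
  proof (cases "n \<ge> 1")
    case True
    have mAn: "A n \<in> measurable M op_space" using iid_meas True by blast
    have dn: "distr M op_space (A n) = distr M op_space (A 1)" using iid_dist True by blast
    have tAn: "\<forall>\<omega>\<in>space M. topical_op (A n \<omega>)" using topical True by blast
    have "AE \<omega> in M. A n \<omega> \<in> S"
      unfolding S_def by (rule supp_AE[OF P mA1 mAn dn tA1 tAn])
    then show ?thesis by auto
  qed simp
  have AEall: "AE \<omega> in M. \<forall>n. n \<ge> 1 \<longrightarrow> A n \<omega> \<in> S"
    using AEn by (simp add: AE_all_countable)
  have prod_T: "prodop A n \<omega> \<in> gen_semigroup S" if "\<forall>n. n \<ge> 1 \<longrightarrow> A n \<omega> \<in> S" "n \<ge> 1" for n \<omega>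
    using that(2)
  proof (induction n rule: dec_induct)
    case base
    have "prodop A 1 \<omega> = A 1 \<omega>" by (simp add: comp_def id_def)
    then show ?case using that(1) by (auto intro: gen_semigroup.base)
  next
    case (step m)
    have "A (Suc m) \<omega> \<in> S" using that(1) by simp
    then have "A (Suc m) \<omega> \<circ> prodop A m \<omega> \<in> gen_semigroup S"
      using step.IH by (rule gen_semigroup.comp[OF gen_semigroup.base])
    then show ?case by (simp only: prodop.simps)
  qed
  obtain N where N: "N \<ge> 1" and mN: "measure M {\<omega> \<in> space M. rank_one (prodop A N \<omega>)} > 0"
    using memory_loss by blast
  define R where "R = {\<omega> \<in> space M. rank_one (prodop A N \<omega>)}"
  have "R \<in> sets M" using mN measure_notin_sets[of R M] unfolding R_def by force
  obtain \<omega>0 where \<omega>0: "\<omega>0 \<in> R" "\<forall>n. n \<ge> 1 \<longrightarrow> A n \<omega>0 \<in> S"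
  proof (rule ccontr)
    assume "\<not> thesis"
    then have sub: "R \<subseteq> {\<omega>\<in>space M. \<not> (\<forall>n. n \<ge> 1 \<longrightarrow> A n \<omega> \<in> S)}" using that unfolding R_def by blast
    obtain Z where Z: "{\<omega>\<in>space M. \<not> (\<forall>n. n \<ge> 1 \<longrightarrow> A n \<omega> \<in> S)} \<subseteq> Z" "emeasure M Z = 0" "Z \<in> sets M"
      using AEall by (rule AE_E)
    have "emeasure M R = 0"
      using emeasure_mono[of R Z M] sub Z by auto
    then have "measure M R = 0" by (simp add: measure_def)
    then show False using mN unfolding R_def by simp
  qed
  define \<theta>' where "\<theta>' = prodop A N \<omega>0"
  have \<theta>'T: "\<theta>' \<in> gen_semigroup S" unfolding \<theta>'_def by (rule prod_T[OF \<omega>0(2) N])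
  have \<theta>'r: "rank_one \<theta>'" using \<omega>0(1) unfolding R_def \<theta>'_def by simp
  define y where "y = \<theta>' 0"
  define i0 :: 'd where "i0 = undefined"
  define \<psi> where "\<psi> z = \<theta> z $ i0" for z
  have \<psi>: "topical_fun \<psi>" unfolding \<psi>_def by (rule topical_op_coord[OF \<theta>])
  have key: "AE \<omega> in M. \<forall>n. \<exists>k::int. \<psi> (prodop A n \<omega> y) - \<psi> y = real n * a + b * of_int k"
    using AEall
  proof (rule AE_mp, intro AE_I2 impI allI)
    fix \<omega> n assume good: "\<forall>n. n \<ge> 1 \<longrightarrow> A n \<omega> \<in> S"
    have "(prodop A n \<omega> \<circ> \<theta>') \<in> gen_semigroup S \<and> rank_one (prodop A n \<omega> \<circ> \<theta>') \<and>
          (\<exists>k::int. \<psi> (prodop A n \<omega> y) - \<psi> y = real n * a + b * of_int k)"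
    proof (induction n)
      case 0
      then show ?case using \<theta>'T \<theta>'r by (auto intro: exI[of _ 0])
    next
      case (Suc n)
      then obtain k where IH: "(prodop A n \<omega> \<circ> \<theta>') \<in> gen_semigroup S" "rank_one (prodop A n \<omega> \<circ> \<theta>')"
        "\<psi> (prodop A n \<omega> y) - \<psi> y = real n * a + b * of_int k" by blast
      have BS: "A (Suc n) \<omega> \<in> S" using good by simp
      have Btop: "topical_op (A (Suc n) \<omega>)" using BS unfolding S_def supp_law_def by simp
      have eqc: "prodop A (Suc n) \<omega> \<circ> \<theta>' = A (Suc n) \<omega> \<circ> (prodop A n \<omega> \<circ> \<theta>')" by (simp add: comp_assoc)
      have m1: "prodop A (Suc n) \<omega> \<circ> \<theta>' \<in> gen_semigroup S"
        unfolding eqc by (rule gen_semigroup.comp[OF gen_semigroup.base[OF BS] IH(1)])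
      have m2: "rank_one (prodop A (Suc n) \<omega> \<circ> \<theta>')"
        unfolding eqc by (rule rank_one_comp[OF Btop IH(2)])
      obtain k' :: int where k': "\<theta> (A (Suc n) \<omega> ((prodop A n \<omega> \<circ> \<theta>') 0)) - \<theta> ((prodop A n \<omega> \<circ> \<theta>') 0) = (a + b * of_int k') *\<^sub>R ones"
        using cond BS IH(1,2) by blast
      have e1: "(prodop A n \<omega> \<circ> \<theta>') 0 = prodop A n \<omega> y" by (simp add: y_def)
      have e2: "A (Suc n) \<omega> (prodop A n \<omega> y) = prodop A (Suc n) \<omega> y" by simp
      from k' have "\<theta> (prodop A (Suc n) \<omega> y) - \<theta> (prodop A n \<omega> y) = (a + b * of_int k') *\<^sub>R ones"
        by (simp only: e1 e2)
      then have "(\<theta> (prodop A (Suc n) \<omega> y) - \<theta> (prodop A n \<omega> y)) $ i0 = a + b * of_int k'" by simp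
      then have "\<psi> (prodop A (Suc n) \<omega> y) - \<psi> (prodop A n \<omega> y) = a + b * of_int k'"
        unfolding \<psi>_def by simp
      then have "\<psi> (prodop A (Suc n) \<omega> y) - \<psi> y = real (Suc n) * a + b * of_int (k + k')"
        using IH(3) by (simp add: algebra_simps)
      then show ?case using m1 m2 by blast
    qed
    then show "\<exists>k::int. \<psi> (prodop A n \<omega> y) - \<psi> y = real n * a + b * of_int k" by blast
  qed
  have nu_prob: "prob_space \<nu>0" and nu_sets: "sets \<nu>0 = sets borel"
    using nu0_inv unfolding invariant_pr_def by auto
  have nu_space: "space \<nu>0 = UNIV" using sets_eq_imp_space_eq[OF nu_sets] by simp
  have nu_UNIV: "emeasure \<nu>0 UNIV = 1"
    using prob_space.emeasure_space_1[OF nu_prob] nu_space by simp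
  obtain Rb :: real where Rb: "Rb > 0" "emeasure \<nu>0 (ball 0 Rb) > 0"
  proof (rule ccontr)
    assume nt: "\<not> thesis"
    have z: "emeasure \<nu>0 (ball 0 (real (Suc n))) = 0" for n
    proof -
      have "\<not> emeasure \<nu>0 (ball 0 (real (Suc n))) > 0"
      proof
        assume "emeasure \<nu>0 (ball 0 (real (Suc n))) > 0"
        then have thesis using that[of "real (Suc n)"] by simp
        then show False using nt by simp
      qed
      then show ?thesis using not_gr_zero by blast
    qed
    have "(\<Union>n. ball (0::real^'d) (real (Suc n))) \<in> null_sets \<nu>0"
      using z nu_sets by (intro null_sets_UN) (auto simp: null_sets_def)
    moreover have "(\<Union>n. ball (0::real^'d) (real (Suc n))) = UNIV"
    proof (intro set_eqI iffI)
      fix x :: "real^'d"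
      obtain n :: nat where "norm x < real n" using reals_Archimedean2 by blast
      then show "x \<in> (\<Union>n. ball (0::real^'d) (real (Suc n)))" by (auto intro!: exI[of _ n])
    qed simp
    ultimately show False using nu_UNIV by (simp add: null_sets_def)
  qed
  define \<beta> where "\<beta> = (if b = 0 then 1 else \<bar>b\<bar>)"
  have \<beta>: "\<beta> > 0" unfolding \<beta>_def by auto
  have bmul: "\<exists>j::int. b * of_int k = \<beta> * of_int j" for k unfolding \<beta>_def by (rule exists_int_mult)
  define h where "h z = max 0 (Rb - norm (proj z)) * max 0 (\<beta> / 2 - \<bar>\<psi> z\<bar>)" for z
  have h_nonneg: "h z \<ge> 0" for z unfolding h_def by simp
  have h_nz: "h z \<noteq> 0 \<longleftrightarrow> norm (proj z) < Rb \<and> \<bar>\<psi> z\<bar> < \<beta> / 2" for z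
    unfolding h_def by (auto simp: max_def)
  have h_le: "h z \<le> Rb * (\<beta> / 2)" for z
    unfolding h_def using Rb \<beta> by (intro mult_mono) (auto simp: max_def)
  have cont_\<psi>: "continuous_on UNIV \<psi>" by (rule topical_fun_cont[OF \<psi>])
  have cont_\<phi>: "continuous_on UNIV \<phi>" by (rule topical_fun_cont[OF phi])
  have h_cont: "continuous_on UNIV h"
    unfolding h_def using cont_proj cont_\<psi> by (auto intro!: continuous_intros)
  define Mz where "Mz = \<beta> / 2 + \<bar>\<psi> 0\<bar> + Rb"
  have mean_bd: "\<bar>mean z\<bar> \<le> Mz" if "h z \<noteq> 0" for z
  proof -
    have a1: "norm (proj z) < Rb" "\<bar>\<psi> z\<bar> < \<beta> / 2" using that h_nz by auto
    have e: "\<psi> z = \<psi> (proj z) + mean z" by (rule topical_fun_proj[OF \<psi>])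
    have l: "\<bar>\<psi> (proj z) - \<psi> 0\<bar> \<le> norm (proj z)" using topical_fun_lip[OF \<psi>, of "proj z" 0] by simp
    from a1(2) have b1: "\<psi> z < \<beta> / 2" "- \<psi> z < \<beta> / 2" by (auto simp: abs_less_iff)
    from l have b2: "\<psi> (proj z) - \<psi> 0 \<le> norm (proj z)" "\<psi> 0 - \<psi> (proj z) \<le> norm (proj z)"
      by (auto simp: abs_le_iff)
    have b3: "\<psi> 0 \<le> \<bar>\<psi> 0\<bar>" "- \<psi> 0 \<le> \<bar>\<psi> 0\<bar>" by auto
    have c1: "mean z \<le> Mz" unfolding Mz_def using e a1(1) b1 b2 b3 by linarith
    have c2: "- mean z \<le> Mz" unfolding Mz_def using e a1(1) b1 b2 b3 by linarith
    show ?thesis using c1 c2 by (simp add: abs_le_iff)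
  qed
  define r0 where "r0 = Rb + Mz * norm (ones :: real^'d)"
  have h_supp: "norm z \<le> r0" if "h z \<noteq> 0" for z
  proof -
    have "norm z = norm (proj z + mean z *\<^sub>R ones)" using proj_decomp[of z] by simp
    also have "\<dots> \<le> norm (proj z) + \<bar>mean z\<bar> * norm (ones :: real^'d)"
      by (rule order.trans[OF norm_triangle_ineq]) simp
    also have "\<dots> \<le> r0" unfolding r0_def using that h_nz mean_bd[OF that]
      by (intro add_mono mult_right_mono) auto
    finally show ?thesis .
  qed
  define r1 where "r1 = \<bar>\<phi> 0\<bar> + Rb + Mz"
  have r1: "r1 \<ge> 0" unfolding r1_def Mz_def using Rb \<beta> by auto
  have phi_supp: "\<bar>\<phi> z\<bar> \<le> r1" if "h z \<noteq> 0" for z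
  proof -
    have e: "\<phi> z = \<phi> (proj z) + mean z" by (rule topical_fun_proj[OF phi])
    have l: "\<bar>\<phi> (proj z) - \<phi> 0\<bar> \<le> norm (proj z)" using topical_fun_lip[OF phi, of "proj z" 0] by simp
    have a1: "norm (proj z) < Rb" using that h_nz by auto
    have m: "\<bar>mean z\<bar> \<le> Mz" using mean_bd[OF that] .
    from m have b1: "mean z \<le> Mz" "- mean z \<le> Mz" by (auto simp: abs_le_iff)
    from l have b2: "\<phi> (proj z) - \<phi> 0 \<le> norm (proj z)" "\<phi> 0 - \<phi> (proj z) \<le> norm (proj z)"
      by (auto simp: abs_le_iff)
    have b3: "\<phi> 0 \<le> \<bar>\<phi> 0\<bar>" "- \<phi> 0 \<le> \<bar>\<phi> 0\<bar>" by auto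
    have c1: "\<phi> z \<le> r1" unfolding r1_def using e a1 b1 b2 b3 by linarith
    have c2: "- \<phi> z \<le> r1" unfolding r1_def using e a1 b1 b2 b3 by linarith
    show ?thesis using c1 c2 by (simp add: abs_le_iff)
  qed
  define \<Phi> where "\<Phi> x = (proj x, \<phi> x)" for x
  have \<alpha>_space: "space \<alpha> = UNIV" using sets_eq_imp_space_eq[OF alpha_sets] by simp
  have \<Phi>m: "\<Phi> \<in> measurable \<alpha> (borel \<Otimes>\<^sub>M borel)"
    unfolding \<Phi>_def measurable_cong_sets[OF alpha_sets refl]
    by (intro measurable_Pair borel_measurable_continuous_onI cont_proj cont_\<phi>)
  have hm: "h \<in> borel_measurable \<alpha>"
    unfolding measurable_cong_sets[OF alpha_sets refl]
    by (intro borel_measurable_continuous_onI h_cont)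
  have \<alpha>_img: "emeasure \<alpha> (\<Phi> -` E \<inter> space \<alpha>) = emeasure (\<nu>0 \<Otimes>\<^sub>M lborel) E"
    if "E \<in> sets (borel \<Otimes>\<^sub>M borel)" for E
    using emeasure_distr[OF \<Phi>m that] alpha_image unfolding \<Phi>_def by simp
  have int_h: "integrable \<alpha> h"
  proof (rule integrableI_bounded_set[where A="\<Phi> -` (UNIV \<times> {-r1..r1}) \<inter> space \<alpha>" and B="Rb * (\<beta> / 2)"])
    have Es: "UNIV \<times> {-r1..r1} \<in> sets (borel \<Otimes>\<^sub>M borel)" by simp
    show "\<Phi> -` (UNIV \<times> {-r1..r1}) \<inter> space \<alpha> \<in> sets \<alpha>"
      by (rule measurable_sets[OF \<Phi>m Es])
    show "h \<in> borel_measurable \<alpha>" by (rule hm)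
    have "emeasure \<alpha> (\<Phi> -` (UNIV \<times> {-r1..r1}) \<inter> space \<alpha>) = emeasure (\<nu>0 \<Otimes>\<^sub>M lborel) (UNIV \<times> {-r1..r1})"
      by (rule \<alpha>_img[OF Es])
    also have "\<dots> = emeasure \<nu>0 UNIV * emeasure lborel {-r1..r1}"
      using nu_space by (intro lborel.emeasure_pair_measure_Times) (auto simp: nu_sets)
    also have "\<dots> < \<infinity>" using nu_UNIV r1 by simp
    finally show "emeasure \<alpha> (\<Phi> -` (UNIV \<times> {-r1..r1}) \<inter> space \<alpha>) < \<infinity>" .
    show "AE x in \<alpha>. x \<in> \<Phi> -` (UNIV \<times> {-r1..r1}) \<inter> space \<alpha> \<longrightarrow> norm (h x) \<le> Rb * (\<beta> / 2)"
      using h_le h_nonneg by (intro AE_I2) simp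
    show "AE x in \<alpha>. x \<notin> \<Phi> -` (UNIV \<times> {-r1..r1}) \<inter> space \<alpha> \<longrightarrow> h x = 0"
    proof (intro AE_I2 impI)
      fix x assume "x \<notin> \<Phi> -` (UNIV \<times> {-r1..r1}) \<inter> space \<alpha>"
      then have "\<bar>\<phi> x\<bar> > r1" unfolding \<Phi>_def \<alpha>_space by auto
      then show "h x = 0" using phi_supp by force
    qed
  qed
  define E where "E = {x :: (real^'d) \<times> real. norm (fst x) < Rb \<and> \<bar>snd x + \<psi> (fst x) - \<phi> (fst x)\<bar> < \<beta> / 2}"
  have E_open: "open E"
  proof -
    have "E = {x. norm (fst x) < Rb} \<inter> {x. \<bar>snd x + \<psi> (fst x) - \<phi> (fst x)\<bar> < \<beta> / 2}"
      unfolding E_def by auto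
    moreover have "open {x :: (real^'d) \<times> real. norm (fst x) < Rb}"
      by (intro open_Collect_less continuous_intros)
    moreover have "open {x :: (real^'d) \<times> real. \<bar>snd x + \<psi> (fst x) - \<phi> (fst x)\<bar> < \<beta> / 2}"
    proof -
      have c1: "continuous_on UNIV (\<lambda>x::(real^'d) \<times> real. \<psi> (fst x))"
        by (rule continuous_on_compose2[OF cont_\<psi>]) (auto intro: continuous_intros)
      have c2: "continuous_on UNIV (\<lambda>x::(real^'d) \<times> real. \<phi> (fst x))"
        by (rule continuous_on_compose2[OF cont_\<phi>]) (auto intro: continuous_intros)
      have c3: "continuous_on UNIV (\<lambda>x::(real^'d) \<times> real. \<bar>snd x + \<psi> (fst x) - \<phi> (fst x)\<bar>)"
        using c1 c2 by (intro continuous_intros) auto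
      show ?thesis by (rule open_Collect_less[OF c3 continuous_on_const])
    qed
    ultimately show ?thesis by auto
  qed
  have Es: "E \<in> sets (borel \<Otimes>\<^sub>M borel)"
    unfolding borel_prod using E_open by simp
  have E_meas: "emeasure (\<nu>0 \<Otimes>\<^sub>M lborel) E = ennreal \<beta> * emeasure \<nu>0 (ball 0 Rb)"
  proof -
    have Es': "E \<in> sets (\<nu>0 \<Otimes>\<^sub>M lborel)" using Es by (simp add: nu_sets cong: sets_pair_measure_cong)
    have "emeasure (\<nu>0 \<Otimes>\<^sub>M lborel) E = (\<integral>\<^sup>+p. emeasure lborel (Pair p -` E) \<partial>\<nu>0)"
      by (rule lborel.emeasure_pair_measure_alt[OF Es'])
    also have "\<dots> = (\<integral>\<^sup>+p. ennreal \<beta> * indicator (ball 0 Rb) p \<partial>\<nu>0)"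
    proof (rule nn_integral_cong)
      fix p :: "real^'d"
      define c where "c = \<psi> p - \<phi> p"
      show "emeasure lborel (Pair p -` E) = ennreal \<beta> * indicator (ball 0 Rb) p"
      proof (cases "norm p < Rb")
        case True
        have "Pair p -` E = {- c - \<beta> / 2 <..< - c + \<beta> / 2}"
          unfolding E_def c_def using True by (auto split: abs_split)
        then show ?thesis using True \<beta> by (simp add: dist_norm)
      next
        case False
        have "Pair p -` E = {}" unfolding E_def using False by auto
        then show ?thesis using False by (simp add: dist_norm)
      qed
    qed
    also have "\<dots> = ennreal \<beta> * emeasure \<nu>0 (ball 0 Rb)"
      by (rule nn_integral_cmult_indicator) (simp add: nu_sets)
    finally show ?thesis .
  qed
  have hE: "{x \<in> space \<alpha>. h x \<noteq> 0} = \<Phi> -` E \<inter> space \<alpha>"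
  proof (intro set_eqI)
    fix z
    have "\<psi> z = \<psi> (proj z) + mean z" by (rule topical_fun_proj[OF \<psi>])
    moreover have "\<phi> z = \<phi> (proj z) + mean z" by (rule topical_fun_proj[OF phi])
    ultimately have "\<psi> z = \<phi> z + \<psi> (proj z) - \<phi> (proj z)" by simp
    then show "z \<in> {x \<in> space \<alpha>. h x \<noteq> 0} \<longleftrightarrow> z \<in> \<Phi> -` E \<inter> space \<alpha>"
      unfolding E_def \<Phi>_def using h_nz[of z] \<alpha>_space by auto
  qed
  define I where "I = (\<integral>x. h x \<partial>\<alpha>)"
  have I_pos: "I > 0"
  proof (rule ccontr)
    assume "\<not> I > 0"
    moreover have "I \<ge> 0" unfolding I_def using h_nonneg by (simp add: integral_nonneg)
    ultimately have "I = 0" by simp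
    then have "AE x in \<alpha>. h x = 0"
      using integral_nonneg_eq_0_iff_AE[OF int_h] h_nonneg unfolding I_def by simp
    then obtain Z where Z: "{x \<in> space \<alpha>. \<not> h x = 0} \<subseteq> Z" "emeasure \<alpha> Z = 0" "Z \<in> sets \<alpha>"
      by (rule AE_E)
    have "emeasure \<alpha> (\<Phi> -` E \<inter> space \<alpha>) = 0"
      using emeasure_mono[OF Z(1) Z(3)] Z(2) hE by simp
    then have "ennreal \<beta> * emeasure \<nu>0 (ball 0 Rb) = 0" using \<alpha>_img[OF Es] E_meas by simp
    then show False using \<beta> Rb(2) by (simp add: ennreal_zero_less_mult_iff)
  qed
  have ret_prob: "prob_space (return borel y)" by (rule prob_space_return) simp
  have ret_sets: "sets (return borel y) = sets borel" by simp
  have AEy: "AE x in return borel y. x = y"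
  proof (rule AE_I')
    have o: "UNIV - {y} \<in> sets borel" by (intro borel_open) (simp add: open_Diff)
    show "UNIV - {y} \<in> null_sets (return borel y)"
      using o by (simp add: null_sets_def)
    show "{x \<in> space (return borel y). \<not> x = y} \<subseteq> UNIV - {y}" by auto
  qed
  have prem: "prob_space (return borel y) \<and> sets (return borel y) = sets borel \<and>
      (\<exists>R. AE x in return borel y. norm x \<le> R) \<and>
      continuous_on UNIV h \<and> (\<exists>K. compact K \<and> (\<forall>x. x \<notin> K \<longrightarrow> h x = 0))"
  proof (intro conjI ret_prob ret_sets h_cont)
    show "\<exists>R. AE x in return borel y. norm x \<le> R"
      by (rule exI[of _ "norm y"]) (rule AE_mp[OF AEy], simp)
    show "\<exists>K. compact K \<and> (\<forall>x. x \<notin> K \<longrightarrow> h x = 0)"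
      by (rule exI[of _ "cball 0 r0"]) (use h_supp in \<open>auto simp: dist_norm\<close>)
  qed
  note ev = LLT[THEN spec[where x="return borel y"], THEN spec[where x=h], THEN mp, OF prem]
  have I4: "I / 4 > 0" using I_pos by simp
  have ev1: "\<forall>\<^sub>F n in sequentially. \<forall>u::real.
          \<bar>\<sigma> * sqrt (2 * pi * real n) *
             (\<integral>x. (\<integral>\<omega>. h (prodop A n \<omega> x - (real n * \<gamma>) *\<^sub>R ones - u *\<^sub>R ones) \<partial>M) \<partial>return borel y)
           - (\<integral>x. exp (- ((u + \<phi> x)\<^sup>2) / (2 * real n * \<sigma>\<^sup>2)) \<partial>return borel y) * I\<bar> \<le> I / 4"
    using ev I4 unfolding I_def by blast
  define Cb where "Cb = (\<beta> + \<bar>\<phi> y\<bar>)\<^sup>2"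
  define N1 where "N1 = nat \<lceil>Cb / \<sigma>\<^sup>2\<rceil>"
  have ev2: "\<forall>\<^sub>F n in sequentially. n \<ge> max N1 1" by (rule eventually_ge_at_top)
  obtain n where n: "n \<ge> max N1 1" and LL: "\<forall>u::real.
          \<bar>\<sigma> * sqrt (2 * pi * real n) *
             (\<integral>x. (\<integral>\<omega>. h (prodop A n \<omega> x - (real n * \<gamma>) *\<^sub>R ones - u *\<^sub>R ones) \<partial>M) \<partial>return borel y)
           - (\<integral>x. exp (- ((u + \<phi> x)\<^sup>2) / (2 * real n * \<sigma>\<^sup>2)) \<partial>return borel y) * I\<bar> \<le> I / 4"
  proof -
    note evc = eventually_conj[OF ev2 ev1]
    from evc obtain N where N: "\<And>m. m \<ge> N \<Longrightarrow> m \<ge> max N1 1 \<and> (\<forall>u::real.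
          \<bar>\<sigma> * sqrt (2 * pi * real m) *
             (\<integral>x. (\<integral>\<omega>. h (prodop A m \<omega> x - (real m * \<gamma>) *\<^sub>R ones - u *\<^sub>R ones) \<partial>M) \<partial>return borel y)
           - (\<integral>x. exp (- ((u + \<phi> x)\<^sup>2) / (2 * real m * \<sigma>\<^sup>2)) \<partial>return borel y) * I\<bar> \<le> I / 4)"
      unfolding eventually_sequentially by blast
    show ?thesis using that[OF conjunct1[OF N[OF order_refl]] conjunct2[OF N[OF order_refl]]] .
  qed
  define t where "t = \<psi> y + real n * a - real n * \<gamma> - \<beta> / 2"
  define u where "u = t - \<beta> * of_int \<lfloor>t / \<beta>\<rfloor>"
  have u0: "u \<ge> 0" unfolding u_def using floor_divide_lower[OF \<beta>, of t] by (simp add: mult.commute)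
  have u1: "u < \<beta>" unfolding u_def using floor_divide_upper[OF \<beta>, of t] by (simp add: algebra_simps)
  have inner0: "(\<integral>\<omega>. h (prodop A n \<omega> y - (real n * \<gamma>) *\<^sub>R ones - u *\<^sub>R ones) \<partial>M) = 0"
  proof (rule integral_eq_zero_AE)
    show "AE \<omega> in M. h (prodop A n \<omega> y - (real n * \<gamma>) *\<^sub>R ones - u *\<^sub>R ones) = 0"
      using key
    proof (rule AE_mp, intro AE_I2 impI)
      fix \<omega> assume "\<forall>n. \<exists>k::int. \<psi> (prodop A n \<omega> y) - \<psi> y = real n * a + b * of_int k"
      then obtain k :: int where k: "\<psi> (prodop A n \<omega> y) - \<psi> y = real n * a + b * of_int k" by blast
      obtain j :: int where j: "b * of_int k = \<beta> * of_int j" using bmul by blast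
      define z where "z = prodop A n \<omega> y"
      have "prodop A n \<omega> y - (real n * \<gamma>) *\<^sub>R ones - u *\<^sub>R ones = z + (- (real n * \<gamma> + u)) *\<^sub>R ones"
        unfolding z_def by (simp add: algebra_simps)
      then have "\<psi> (prodop A n \<omega> y - (real n * \<gamma>) *\<^sub>R ones - u *\<^sub>R ones) = \<psi> z - (real n * \<gamma> + u)"
        using topical_fun_shift[OF \<psi>] by simp
      also have "\<dots> = \<beta> / 2 + \<beta> * of_int (\<lfloor>t / \<beta>\<rfloor> + j)"
        using k j unfolding z_def u_def t_def by (simp add: algebra_simps)
      finally have v0: "\<psi> (prodop A n \<omega> y - (real n * \<gamma>) *\<^sub>R ones - u *\<^sub>R ones) = \<beta> / 2 + \<beta> * of_int (\<lfloor>t / \<beta>\<rfloor> + j)" .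
      have v: "\<bar>\<psi> (prodop A n \<omega> y - (real n * \<gamma>) *\<^sub>R ones - u *\<^sub>R ones)\<bar> \<ge> \<beta> / 2"
        unfolding v0 by (rule abs_half_int[OF \<beta>])
      show "h (prodop A n \<omega> y - (real n * \<gamma>) *\<^sub>R ones - u *\<^sub>R ones) = 0"
        using v h_nz by force
    qed
  qed
  have outer0: "(\<integral>x. (\<integral>\<omega>. h (prodop A n \<omega> x - (real n * \<gamma>) *\<^sub>R ones - u *\<^sub>R ones) \<partial>M) \<partial>return borel y) = 0"
    by (rule integral_eq_zero_AE, rule AE_mp[OF AEy]) (use inner0 in simp)
  define \<rho> where "\<rho> = exp (- ((u + \<phi> y)\<^sup>2) / (2 * real n * \<sigma>\<^sup>2))"
  have rhs: "(\<integral>x. exp (- ((u + \<phi> x)\<^sup>2) / (2 * real n * \<sigma>\<^sup>2)) \<partial>return borel y) = \<rho>"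
  proof -
    have "(\<lambda>x. exp (- ((u + \<phi> x)\<^sup>2) / (2 * real n * \<sigma>\<^sup>2))) \<in> borel_measurable borel"
      using cont_\<phi> n sigma_pos by (intro borel_measurable_continuous_onI) (auto intro!: continuous_intros)
    then show ?thesis unfolding \<rho>_def by (intro integral_return) auto
  qed
  from LL[rule_format, of u] have "\<rho> * I \<le> I / 4" unfolding outer0 rhs by simp
  then have r4: "\<rho> \<le> 1 / 4" using I_pos by (simp add: field_simps)
  have nq: "real n * \<sigma>\<^sup>2 \<ge> Cb"
  proof -
    have "real n \<ge> Cb / \<sigma>\<^sup>2" using n unfolding N1_def by linarith
    then show ?thesis using sigma_pos by (simp add: field_simps)
  qed
  have sq: "(u + \<phi> y)\<^sup>2 \<le> Cb"
  proof -
    have "\<bar>u + \<phi> y\<bar> \<le> \<bar>\<beta> + \<bar>\<phi> y\<bar>\<bar>" using u0 u1 by (simp add: abs_le_iff) linarith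
    then show ?thesis unfolding Cb_def by (simp add: abs_le_square_iff)
  qed
  have pos: "2 * real n * \<sigma>\<^sup>2 > 0" using n sigma_pos by simp
  have "(u + \<phi> y)\<^sup>2 / (2 * real n * \<sigma>\<^sup>2) \<le> 1 / 2"
    using sq nq pos by (simp add: field_simps)
  then have "\<rho> \<ge> 1 / 2"
    unfolding \<rho>_def using exp_ge_add_one_self[of "- ((u + \<phi> y)\<^sup>2) / (2 * real n * \<sigma>\<^sup>2)"] by simp
  then show False using r4 by simp
qed


end
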